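(* For $\tau$ in the upper half-plane, $\mathfrak{p}^2(\tau)\mathfrak{p}^2(2\tau)+\mathfrak{p}^2(\tau)-2\mathfrak{p}(2\tau)=0$.
   Context: $q=e^{2\pi i\tau}$, $q^r:=e^{2\pi i r\tau}$, and $\mathfrak{p}(\tau)=2q^{1/16}\prod_{n\ge1}\left(\frac{1+q^{n/2}}{1+q^{n/2-1/4}}\right)^2$ (equivalently $\mathfrak{f}_2(\tau/2)^2/\mathfrak{f}(\tau/2)^2$ with Weber–Schläfli functions $\mathfrak{f},\mathfrak{f}_2$). *)

theory Defs
  imports "HOL-Analysis.Analysis"
begin

definition qpow :: "real \<Rightarrow> complex \<Rightarrow> complex" where
  "qpow r \<tau> = exp (2 * of_real pi * \<i> * of_real r * \<tau>)"

definition pfun :: "complex \<Rightarrow> complex" where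
  "pfun \<tau> = 2 * qpow (1/16) \<tau> *
     (\<Prod>m. ((1 + qpow (real (Suc m) / 2) \<tau>) /
             (1 + qpow (real (Suc m) / 2 - 1/4) \<tau>)) ^ 2)"

end

theory Submission
  imports Defs "HOL-Complex_Analysis.Complex_Analysis"
begin


fun ec :: "complex \<Rightarrow> nat \<Rightarrow> complex" where
  "ec y 0 = 1"
| "ec y (Suc k) = ec y k * y^(2*k+1) / (1 - y^(2*k+2))"

definition EE :: "complex \<Rightarrow> complex \<Rightarrow> complex" where
  "EE y z = (\<Sum>k. ec y k * z^k)"

lemma one_minus_pow_nz:
  fixes y :: complex assumes "norm y < 1" "n > 0"
  shows "1 - y^n \<noteq> 0"
proof
  assume "1 - y^n = 0"
  hence "norm (y^n) = 1" by (metis eq_iff_diff_eq_0 norm_one)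
  moreover have "norm (y^n) < 1" using assms by (simp add: norm_power power_less_one_iff)
  ultimately show False by simp
qed

lemma ec_summable_norm:
  fixes y z :: complex assumes y: "norm y < 1"
  shows "summable (\<lambda>k. norm (ec y k * z^k))"
proof -
  define d where "d = 1 - norm y"
  have d: "d > 0" using y by (simp add: d_def)
  have "(\<lambda>k. norm y ^ k * norm z) \<longlonglongrightarrow> 0 * norm z"
    by (intro tendsto_mult tendsto_const LIMSEQ_power_zero) (use y in auto)
  hence "eventually (\<lambda>k. norm y ^ k * norm z < d/2) sequentially"
    using d by (intro order_tendstoD) auto
  then obtain N where N: "\<And>k. k \<ge> N \<Longrightarrow> norm y ^ k * norm z < d/2"
    by (auto simp: eventually_sequentially)
  show ?thesis
  proof (rule summable_ratio_test[where c="1/2" and N=N])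
    fix k assume k: "k \<ge> N"
    have nz: "1 - y^(2*k+2) \<noteq> 0" by (rule one_minus_pow_nz[OF y]) simp
    have low: "norm (1 - y^(2*k+2)) \<ge> d"
    proof -
      have "norm y ^ (2*k+2) \<le> norm y ^ 1" by (rule power_decreasing) (use y in auto)
      hence "norm (y^(2*k+2)) \<le> norm y" by (metis norm_power power_one_right)
      moreover have "norm (1 - y^(2*k+2)) \<ge> 1 - norm (y^(2*k+2))"
        using norm_triangle_ineq2[of 1 "y^(2*k+2)"] by simp
      ultimately show ?thesis by (simp add: d_def)
    qed
    have "norm y ^ (2*k+1) \<le> norm y ^ k" by (rule power_decreasing) (use y in auto)
    hence up: "norm (y^(2*k+1)) * norm z \<le> norm y ^ k * norm z"
      by (metis norm_power mult_right_mono norm_ge_zero)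
    have Ypos: "norm (1 - y^(2*k+2)) > 0" using nz by simp
    have "ec y (Suc k) * z^Suc k = (ec y k * z^k) * (y^(2*k+1) * z * inverse (1 - y^(2*k+2)))"
      by (simp add: divide_inverse mult_ac)
    hence "norm (ec y (Suc k) * z^Suc k) = norm (ec y k * z^k) * (norm (y^(2*k+1)) * norm z * inverse (norm (1 - y^(2*k+2))))"
      by (simp add: norm_mult norm_inverse)
    also have "norm (y^(2*k+1)) * norm z * inverse (norm (1 - y^(2*k+2))) \<le> 1/2"
    proof -
      have "2 * (norm (y^(2*k+1)) * norm z) \<le> norm (1 - y^(2*k+2))" using up N[OF k] low by linarith
      thus ?thesis using Ypos by (simp add: field_simps)
    qed
    hence "norm (ec y k * z^k) * (norm (y^(2*k+1)) * norm z * inverse (norm (1 - y^(2*k+2)))) \<le> norm (ec y k * z^k) * (1/2)"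
      by (intro mult_left_mono) auto
    finally have fin: "norm (ec y (Suc k) * z^Suc k) \<le> norm (ec y k * z^k) * (1/2)" .
    show "norm (norm (ec y (Suc k) * z ^ Suc k)) \<le> 1/2 * norm (norm (ec y k * z ^ k))"
      using fin by (metis abs_norm_cancel real_norm_def mult.commute)
  qed simp
qed

lemma ec_summable:
  fixes y z :: complex assumes y: "norm y < 1"
  shows "summable (\<lambda>k. ec y k * z^k)"
  by (rule summable_norm_cancel[OF ec_summable_norm[OF y]])

lemma EE_sums: "norm y < 1 \<Longrightarrow> (\<lambda>k. ec y k * z^k) sums EE y z"
  unfolding EE_def by (rule summable_sums[OF ec_summable])

lemma EE_0: "EE y 0 = 1"
  unfolding EE_def by (subst powser_zero) simp

lemma EE_isCont: "norm y < 1 \<Longrightarrow> isCont (EE y) z"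
  unfolding EE_def[abs_def] by (rule isCont_powser_converges_everywhere) (rule ec_summable)

lemma EE_func:
  fixes y z :: complex assumes y: "norm y < 1"
  shows "EE y z = (1 + y*z) * EE y (y^2*z)"
proof -
  define A where "A = (\<lambda>k. ec y k * (y^2*z)^k)"
  define B where "B = (\<lambda>k. y*z*A k)"
  define g where "g = (\<lambda>k. if k = 0 then 0 else B (k - 1))"
  have sA: "A sums EE y (y^2*z)" unfolding A_def by (rule EE_sums[OF y])
  have sB: "B sums (y*z*EE y (y^2*z))" unfolding B_def by (rule sums_mult[OF sA])
  have "(\<lambda>n. g (Suc n)) sums (y*z*EE y (y^2*z))" using sB by (simp add: g_def)
  hence sg: "g sums (y*z*EE y (y^2*z))" by (subst (asm) sums_Suc_iff) (simp add: g_def)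
  have "(\<lambda>k. A k + g k) sums (EE y (y^2*z) + y*z*EE y (y^2*z))"
    by (rule sums_add[OF sA sg])
  moreover have "A k + g k = ec y k * z^k" for k
  proof (cases k)
    case 0 then show ?thesis by (simp add: A_def g_def)
  next
    case (Suc m)
    have nz: "1 - y^(2*m+2) \<noteq> 0" by (rule one_minus_pow_nz[OF y]) simp
    have p1: "(y^2*z)^(Suc m) = y^(2*m+2) * z^(Suc m)"
      by (simp only: power_mult_distrib power_mult[symmetric]) simp
    have p2: "y*z*(y^2*z)^m = y^(2*m+1)*z^(Suc m)"
      by (simp only: power_mult_distrib power_mult[symmetric]) (simp add: mult_ac)
    have "A k + g k = ec y (Suc m) * (y^2*z)^(Suc m) + ec y m * (y*z*(y^2*z)^m)"
      by (simp add: A_def B_def g_def Suc mult_ac)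
    also have "\<dots> = z^(Suc m) * (ec y (Suc m) * y^(2*m+2) + ec y m * y^(2*m+1))"
      unfolding p1 p2 by (simp add: algebra_simps)
    finally have "A k + g k = z^(Suc m) * (ec y (Suc m) * y^(2*m+2) + ec y m * y^(2*m+1))" .
    also have "ec y (Suc m) * y^(2*m+2) + ec y m * y^(2*m+1) = ec y (Suc m)"
      using nz by (simp add: field_simps)
    finally show ?thesis by (simp add: Suc mult.commute)
  qed
  ultimately have "(\<lambda>k. ec y k * z^k) sums ((1 + y*z) * EE y (y^2*z))"
    by (simp add: algebra_simps)
  with EE_sums[OF y] show ?thesis using sums_unique2 by blast
qed

lemma EE_iter:
  fixes y z :: complex assumes y: "norm y < 1"
  shows "EE y z = (\<Prod>n<N. (1 + y^(2*n+1)*z)) * EE y (y^(2*N)*z)"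
proof (induction N)
  case 0 then show ?case by simp
next
  case (Suc N)
  have a: "y * (y^(2*N)*z) = y^(2*N+1)*z" by simp
  have e: "y^2*(y^(2*N)*z) = y^(2*Suc N)*z"
    by (simp add: mult_ac power2_eq_square)
  have step: "EE y (y^(2*N)*z) = (1 + y^(2*N+1)*z) * EE y (y^(2*Suc N)*z)"
    using EE_func[OF y, of "y^(2*N)*z"] by (simp only: a e)
  from Suc.IH have "EE y z = (\<Prod>n<N. (1 + y^(2*n+1)*z)) * EE y (y^(2*N)*z)" .
  also have "\<dots> = (\<Prod>n<N. (1 + y^(2*n+1)*z)) * ((1 + y^(2*N+1)*z) * EE y (y^(2*Suc N)*z))"
    by (simp only: step)
  also have "\<dots> = (\<Prod>n<Suc N. (1 + y^(2*n+1)*z)) * EE y (y^(2*Suc N)*z)"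
    by (simp only: prod.lessThan_Suc mult.assoc)
  finally show ?case .
qed

lemma EE_prod_lim:
  fixes y z :: complex assumes y: "norm y < 1"
  shows "(\<lambda>N. \<Prod>n<N. (1 + y^(2*n+1)*z)) \<longlonglongrightarrow> EE y z"
proof -
  have "(\<lambda>N. y^(2*N)*z) \<longlonglongrightarrow> 0 * z"
  proof (intro tendsto_mult tendsto_const)
    have "(\<lambda>N. (y^2)^N) \<longlonglongrightarrow> 0" using y
      by (intro LIMSEQ_power_zero) (simp add: norm_power power_less_one_iff)
    thus "(\<lambda>N. y^(2*N)) \<longlonglongrightarrow> 0" by (simp add: power_mult)
  qed
  hence t: "(\<lambda>N. EE y (y^(2*N)*z)) \<longlonglongrightarrow> 1"
    using isCont_tendsto_compose[OF EE_isCont[OF y, of 0]] by (simp add: EE_0)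
  hence ev: "eventually (\<lambda>N. EE y (y^(2*N)*z) \<noteq> 0) sequentially"
    by (rule tendsto_imp_eventually_ne) simp
  have "(\<lambda>N. EE y z / EE y (y^(2*N)*z)) \<longlonglongrightarrow> EE y z / 1"
    by (intro tendsto_divide tendsto_const t) simp
  hence "(\<lambda>N. EE y z / EE y (y^(2*N)*z)) \<longlonglongrightarrow> EE y z" by simp
  moreover have "eventually (\<lambda>N. EE y z / EE y (y^(2*N)*z) = (\<Prod>n<N. (1 + y^(2*n+1)*z))) sequentially"
    using ev
  proof eventually_elim
    case (elim N)
    show ?case by (subst EE_iter[OF y, of z N]) (use elim in simp)
  qed
  ultimately show ?thesis by (rule Lim_transform_eventually)
qed

lemma EE_nonzero:
  fixes y z :: complex assumes y: "norm y < 1" and nz: "\<And>n. 1 + y^(2*n+1)*z \<noteq> 0"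
  shows "EE y z \<noteq> 0"
proof -
  define f where "f = (\<lambda>n. 1 + y^(2*n+1)*z)"
  have "summable (\<lambda>n. norm (f n - 1))"
  proof -
    have g: "summable (\<lambda>n. (norm y ^ 2) ^ n)"
      by (rule summable_geometric) (use y in \<open>simp add: power_less_one_iff abs_square_less_1\<close>)
    have "summable (\<lambda>n. norm y * norm z * (norm y ^ 2) ^ n)"
      by (rule summable_mult[OF g])
    moreover have "(\<lambda>n. norm (f n - 1)) = (\<lambda>n. norm y * norm z * (norm y ^ 2) ^ n)"
      by (auto simp: f_def norm_mult norm_power power_add power_mult[symmetric] mult_ac)
    ultimately show ?thesis by simp
  qed
  hence cp: "convergent_prod f"
    by (intro abs_convergent_prod_imp_convergent_prod summable_imp_abs_convergent_prod)
  have "prodinf f \<noteq> 0" by (rule prodinf_nonzero[OF cp]) (use nz in \<open>simp add: f_def\<close>)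
  moreover have "(\<lambda>N. \<Prod>n<N. f n) \<longlonglongrightarrow> prodinf f"
    by (rule has_prod_imp_tendsto') (use cp convergent_prod_has_prod in blast)
  moreover have "(\<lambda>N. \<Prod>n<N. f n) \<longlonglongrightarrow> EE y z" unfolding f_def by (rule EE_prod_lim[OF y])
  ultimately have "prodinf f = EE y z" using LIMSEQ_unique by blast
  with \<open>prodinf f \<noteq> 0\<close> show ?thesis by simp
qed



lemma has_sum_prod_complex:
  fixes f :: "'a \<Rightarrow> complex" and g :: "'b \<Rightarrow> complex"
  assumes f: "(f has_sum a) A" and g: "(g has_sum b) B"
  shows "((\<lambda>(x,y). f x * g y) has_sum (a*b)) (A \<times> B)"
proof -
  have fa: "(\<lambda>x. norm (f x)) summable_on A"
    using f summable_on_iff_abs_summable_on_complex summable_on_def by blast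
  have ga: "(\<lambda>x. norm (g x)) summable_on B"
    using g summable_on_iff_abs_summable_on_complex summable_on_def by blast
  have "(\<lambda>p. norm ((\<lambda>(x,y). f x * g y) p)) summable_on (Sigma A (\<lambda>_. B))"
  proof (subst Infinite_Sum.abs_summable_on_Sigma_iff, intro conjI ballI)
    fix x assume "x \<in> A"
    show "(\<lambda>y. norm (case (x, y) of (x, y) \<Rightarrow> f x * g y)) summable_on B"
      using summable_on_cmult_right[OF ga, of "norm (f x)"] by (simp add: norm_mult)
  next
    have "(\<lambda>x. norm (f x) * (\<Sum>\<^sub>\<infinity>y\<in>B. norm (g y))) summable_on A"
      by (rule summable_on_cmult_left[OF fa])
    moreover have "(\<Sum>\<^sub>\<infinity>y\<in>B. norm (case (x, y) of (x, y) \<Rightarrow> f x * g y)) = norm (f x) * (\<Sum>\<^sub>\<infinity>y\<in>B. norm (g y))" for x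
      by (simp add: norm_mult infsum_cmult_right')
    moreover have "(\<Sum>\<^sub>\<infinity>y\<in>B. norm (g y)) \<ge> 0" by (simp add: infsum_nonneg)
    ultimately show "(\<lambda>x. norm (\<Sum>\<^sub>\<infinity>y\<in>B. norm (case (x, y) of (x, y) \<Rightarrow> f x * g y))) summable_on A"
      by (simp add: norm_mult)
  qed
  hence summ: "(\<lambda>(x,y). f x * g y) summable_on (A \<times> B)"
    using abs_summable_summable by blast
  show ?thesis
  proof (rule has_sum_SigmaI[where g="\<lambda>x. f x * b"])
    fix x assume "x \<in> A"
    show "((\<lambda>y. case (x, y) of (x, y) \<Rightarrow> f x * g y) has_sum f x * b) B"
      using has_sum_cmult_right[OF g, of "f x"] by simp
  next
    show "((\<lambda>x. f x * b) has_sum a * b) A" by (rule has_sum_cmult_left[OF f])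
  next
    show "(\<lambda>(x,y). f x * g y) summable_on Sigma A (\<lambda>_. B)" using summ by simp
  qed
qed

lemma EE_has_sum: "norm y < 1 \<Longrightarrow> ((\<lambda>k. ec y k * z^k) has_sum EE y z) UNIV"
  by (rule norm_summable_imp_has_sum[OF ec_summable_norm EE_sums])

definition acoef :: "complex \<Rightarrow> nat \<Rightarrow> complex" where
  "acoef y n = (\<Sum>\<^sub>\<infinity>k. ec y (k+n) * ec y k)"

lemma laurent:
  fixes y z w :: complex assumes y: "norm y < 1" and zw: "z * w = 1"
  shows "\<exists>V1 V2. ((\<lambda>n. acoef y n * z^n) has_sum V1) UNIV \<and>
     ((\<lambda>n. acoef y (Suc n) * w^(Suc n)) has_sum V2) UNIV \<and> EE y z * EE y w = V1 + V2"
proof -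
  define h where "h = (\<lambda>(j,k). ec y j * z^j * (ec y k * w^k))"
  have hs: "(h has_sum (EE y z * EE y w)) UNIV"
    using has_sum_prod_complex[OF EE_has_sum[OF y, of z] EE_has_sum[OF y, of w]]
    by (simp add: h_def)
  hence hsum: "h summable_on UNIV" using summable_on_def by blast
  define \<phi>1 where "\<phi>1 = (\<lambda>(n::nat,k::nat). (k+n, k))"
  define \<phi>2 where "\<phi>2 = (\<lambda>(n::nat,k::nat). (k, k+n+1))"
  have inj1: "inj \<phi>1" by (auto simp: \<phi>1_def inj_on_def)
  have inj2: "inj \<phi>2" by (auto simp: \<phi>2_def inj_on_def)
  have disj: "range \<phi>1 \<inter> range \<phi>2 = {}" by (auto simp: \<phi>1_def \<phi>2_def)
  have un: "range \<phi>1 \<union> range \<phi>2 = UNIV"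
  proof (intro equalityI subsetI)
    fix p :: "nat \<times> nat" obtain j k where p: "p = (j,k)" by force
    show "p \<in> range \<phi>1 \<union> range \<phi>2"
    proof (cases "k \<le> j")
      case True
      hence "p = \<phi>1 (j-k, k)" by (simp add: p \<phi>1_def)
      thus ?thesis by blast
    next
      case False
      hence "p = \<phi>2 (k-j-1, j)" by (simp add: p \<phi>2_def)
      thus ?thesis by blast
    qed
  qed simp
  define V1 where "V1 = infsum h (range \<phi>1)"
  define V2 where "V2 = infsum h (range \<phi>2)"
  have h1: "(h has_sum V1) (range \<phi>1)" unfolding V1_def
    by (rule has_sum_infsum, rule summable_on_subset_banach[OF hsum]) simp
  have h2: "(h has_sum V2) (range \<phi>2)" unfolding V2_def
    by (rule has_sum_infsum, rule summable_on_subset_banach[OF hsum]) simp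
  have "(h has_sum (V1 + V2)) UNIV" using has_sum_Un_disjoint[OF h1 h2 disj] un by simp
  hence eq: "EE y z * EE y w = V1 + V2" using hs has_sum_unique by blast
  have z0: "z \<noteq> 0" using zw by auto
  have zwk: "z^k * w^k = 1" for k :: nat by (metis power_mult_distrib power_one zw)
  have r1: "((h \<circ> \<phi>1) has_sum V1) UNIV" using h1 has_sum_reindex[OF inj1] by blast
  have e1: "(h \<circ> \<phi>1) = (\<lambda>(n,k). ec y (k+n) * ec y k * z^n)"
  proof (intro ext, clarify)
    fix n k :: nat
    have "(h \<circ> \<phi>1) (n,k) = ec y (k+n) * ec y k * z^n * (z^k * w^k)"
      by (simp add: h_def \<phi>1_def power_add algebra_simps)
    thus "(h \<circ> \<phi>1) (n,k) = ec y (k+n) * ec y k * z^n" by (simp add: zwk)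
  qed
  have s1: "((\<lambda>(n,k). ec y (k+n) * ec y k * z^n) has_sum V1) (Sigma UNIV (\<lambda>_. UNIV))"
    using r1 e1 by simp
  have A1: "((\<lambda>n. acoef y n * z^n) has_sum V1) UNIV"
  proof (rule has_sum_SigmaD[OF s1])
    fix n :: nat
    have "(\<lambda>k. ec y (k+n) * ec y k * z^n) summable_on UNIV"
      using summable_on_SigmaD1[of "\<lambda>n k. ec y (k+n) * ec y k * z^n" UNIV "\<lambda>_. UNIV" n]
        s1 summable_on_def by auto
    moreover have zn: "z^n \<noteq> 0" using z0 by simp
    ultimately have "(\<lambda>k. ec y (k+n) * ec y k) summable_on UNIV"
      by (simp only: summable_on_cmult_left'[OF zn])
    hence "((\<lambda>k. ec y (k+n) * ec y k) has_sum acoef y n) UNIV"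
      unfolding acoef_def by (rule has_sum_infsum)
    thus "((\<lambda>k. case (n, k) of (n,k) \<Rightarrow> ec y (k+n) * ec y k * z^n) has_sum acoef y n * z^n) UNIV"
      using has_sum_cmult_left by simp
  qed
  have r2: "((h \<circ> \<phi>2) has_sum V2) UNIV" using h2 has_sum_reindex[OF inj2] by blast
  have e2: "(h \<circ> \<phi>2) = (\<lambda>(n,k). ec y (k + Suc n) * ec y k * w^(Suc n))"
  proof (intro ext, clarify)
    fix n k :: nat
    have "(h \<circ> \<phi>2) (n,k) = ec y (k + Suc n) * ec y k * w^(Suc n) * (z^k * w^k)"
      by (simp add: h_def \<phi>2_def power_add algebra_simps)
    thus "(h \<circ> \<phi>2) (n,k) = ec y (k + Suc n) * ec y k * w^(Suc n)" by (simp add: zwk)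
  qed
  have s2: "((\<lambda>(n,k). ec y (k + Suc n) * ec y k * w^(Suc n)) has_sum V2) (Sigma UNIV (\<lambda>_. UNIV))"
    using r2 e2 by simp
  have w0: "w \<noteq> 0" using zw by auto
  have A2: "((\<lambda>n. acoef y (Suc n) * w^(Suc n)) has_sum V2) UNIV"
  proof (rule has_sum_SigmaD[OF s2])
    fix n :: nat
    have "(\<lambda>k. ec y (k + Suc n) * ec y k * w^(Suc n)) summable_on UNIV"
      using summable_on_SigmaD1[of "\<lambda>n k. ec y (k + Suc n) * ec y k * w^(Suc n)" UNIV "\<lambda>_. UNIV" n]
        s2 summable_on_def by auto
    moreover have wn: "w^(Suc n) \<noteq> 0" using w0 by simp
    ultimately have "(\<lambda>k. ec y (k + Suc n) * ec y k) summable_on UNIV"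
      by (simp only: summable_on_cmult_left'[OF wn])
    hence "((\<lambda>k. ec y (k + Suc n) * ec y k) has_sum acoef y (Suc n)) UNIV"
      unfolding acoef_def by (rule has_sum_infsum)
    thus "((\<lambda>k. case (n, k) of (n,k) \<Rightarrow> ec y (k + Suc n) * ec y k * w^(Suc n)) has_sum acoef y (Suc n) * w^(Suc n)) UNIV"
      using has_sum_cmult_left[where c="w^(Suc n)"] by (simp del: ec.simps)
  qed
  show ?thesis using A1 A2 eq by blast
qed

definition Pos :: "complex \<Rightarrow> complex \<Rightarrow> complex" where
  "Pos y z = (\<Sum>n. acoef y n * z^n)"

lemma Pos_summable:
  assumes y: "norm y < 1" shows "summable (\<lambda>n. acoef y n * z^n)"
proof (cases "z = 0")
  case True then show ?thesis by simp
next
  case False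
  then obtain V1 V2 where "((\<lambda>n. acoef y n * z^n) has_sum V1) UNIV"
    using laurent[OF y, of z "1/z"] by auto
  thus ?thesis using has_sum_imp_sums sums_summable by blast
qed

lemma Pos_sums: "norm y < 1 \<Longrightarrow> (\<lambda>n. acoef y n * z^n) sums Pos y z"
  unfolding Pos_def using Pos_summable by (blast intro: summable_sums)

lemma EE_Pos:
  fixes y z :: complex assumes y: "norm y < 1" and z: "z \<noteq> 0"
  shows "EE y z * EE y (1/z) = Pos y z + Pos y (1/z) - acoef y 0"
proof -
  obtain V1 V2 where A1: "((\<lambda>n. acoef y n * z^n) has_sum V1) UNIV"
     and A2: "((\<lambda>n. acoef y (Suc n) * (1/z)^(Suc n)) has_sum V2) UNIV"
     and eq: "EE y z * EE y (1/z) = V1 + V2"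
    using laurent[OF y, of z "1/z"] z by auto
  have "Pos y z = V1" using has_sum_imp_sums[OF A1] Pos_sums[OF y] sums_unique2 by blast
  moreover have "(\<lambda>n. acoef y n * (1/z)^n) sums (V2 + acoef y 0 * (1/z)^0)"
    using sums_Suc_iff[of "\<lambda>n. acoef y n * (1/z)^n" V2] has_sum_imp_sums[OF A2] by blast
  hence "(\<lambda>n. acoef y n * (1/z)^n) sums (V2 + acoef y 0)" by simp
  hence "Pos y (1/z) = V2 + acoef y 0" using Pos_sums[OF y] sums_unique2 by blast
  ultimately show ?thesis using eq by simp
qed

lemma Pos_isCont: "norm y < 1 \<Longrightarrow> isCont (Pos y) z"
  unfolding Pos_def[abs_def] by (rule isCont_powser_converges_everywhere) (rule Pos_summable)



definition Qf :: "complex \<Rightarrow> complex \<Rightarrow> complex" where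
  "Qf y u = (\<Sum>n. acoef y (Suc (Suc n)) * u^n)"

lemma Q_summable:
  assumes y: "norm y < 1" shows "summable (\<lambda>n. acoef y (Suc (Suc n)) * u^n)"
proof -
  have "summable (\<lambda>n. acoef y (Suc n) * u^n)"
    by (rule powser_split_head(3)[OF Pos_summable[OF y]])
  thus ?thesis by (rule powser_split_head(3))
qed

lemma Pos_split:
  assumes y: "norm y < 1"
  shows "Pos y u = acoef y 0 + acoef y 1 * u + u^2 * Qf y u"
proof -
  have s0: "summable (\<lambda>n. acoef y n * u^n)" by (rule Pos_summable[OF y])
  have s1: "summable (\<lambda>n. acoef y (Suc n) * u^n)" by (rule powser_split_head(3)[OF s0])
  have "Pos y u = acoef y 0 + (\<Sum>n. acoef y (Suc n) * u^n) * u"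
    unfolding Pos_def by (rule powser_split_head(1)[OF s0])
  also have "(\<Sum>n. acoef y (Suc n) * u^n) = acoef y 1 + Qf y u * u"
    unfolding Qf_def using powser_split_head(1)[OF s1] by simp
  finally show ?thesis by (simp add: algebra_simps power2_eq_square)
qed

lemma Q_isCont: "norm y < 1 \<Longrightarrow> isCont (Qf y) u"
  unfolding Qf_def[abs_def] by (rule isCont_powser_converges_everywhere) (rule Q_summable)

lemma EE_feq:
  fixes y z :: complex assumes y: "norm y < 1" and y0: "y \<noteq> 0" and z0: "z \<noteq> 0"
  shows "y*z*(EE y (y^2*z) * EE y (1/(y^2*z))) = EE y z * EE y (1/z)"
proof -
  have h1: "y * (1/(y^2*z)) = 1/(y*z)" using y0 z0 by (simp add: power2_eq_square field_simps)
  have h2: "y^2 * (1/(y^2*z)) = 1/z" using y0 z0 by (simp add: power2_eq_square field_simps)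
  have e1: "EE y (1/(y^2*z)) = (1 + 1/(y*z)) * EE y (1/z)"
    using EE_func[OF y, of "1/(y^2*z)"] by (simp only: h1 h2)
  have e2: "EE y z = (1 + y*z) * EE y (y^2*z)" by (rule EE_func[OF y])
  show ?thesis unfolding e1 e2 using y0 z0 by (simp add: field_simps)
qed

fun gco :: "complex \<Rightarrow> nat \<Rightarrow> complex" where
  "gco y 0 = acoef y 1 / y - acoef y 0"
| "gco y (Suc m) = y^(2*m+1) * acoef y m - acoef y (Suc m)"

lemma G_sums:
  fixes y z :: complex assumes y: "norm y < 1"
  shows "(\<lambda>n. gco y n * z^n) sums (y*z*Pos y (y^2*z) + acoef y 1 / y - Pos y z)"
proof -
  define B where "B = (\<lambda>n. y*z*(acoef y n * (y^2*z)^n))"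
  define g where "g = (\<lambda>k. if k = 0 then 0 else B (k - 1))"
  have sB: "B sums (y*z*Pos y (y^2*z))" unfolding B_def by (rule sums_mult[OF Pos_sums[OF y]])
  have "(\<lambda>n. g (Suc n)) sums (y*z*Pos y (y^2*z))" using sB by (simp add: g_def)
  hence sg: "g sums (y*z*Pos y (y^2*z))" by (subst (asm) sums_Suc_iff) (simp add: g_def)
  have s2: "(\<lambda>n. if n = 0 then acoef y 1 / y else 0) sums (acoef y 1 / y)"
    using sums_single[of 0 "\<lambda>_. acoef y 1 / y"] by simp
  have "(\<lambda>n. g n + (if n = 0 then acoef y 1 / y else 0) - acoef y n * z^n) sums
        (y*z*Pos y (y^2*z) + acoef y 1 / y - Pos y z)"
    by (intro sums_diff sums_add sg s2 Pos_sums[OF y])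
  moreover have "g n + (if n = 0 then acoef y 1 / y else 0) - acoef y n * z^n = gco y n * z^n" for n
  proof (cases n)
    case 0 then show ?thesis by (simp add: g_def)
  next
    case (Suc m)
    have p2: "y*z*(y^2*z)^m = y^(2*m+1)*z^(Suc m)"
      by (simp only: power_mult_distrib power_mult[symmetric]) (simp add: mult_ac)
    have "g n = acoef y m * (y*z*(y^2*z)^m)" by (simp add: g_def B_def Suc mult_ac)
    also have "\<dots> = y^(2*m+1) * acoef y m * z^(Suc m)" unfolding p2 by (simp add: mult_ac)
    finally show ?thesis by (simp add: Suc algebra_simps)
  qed
  ultimately show ?thesis by simp
qed

lemma powser_const_coeff:
  fixes c :: "nat \<Rightarrow> complex"
  assumes sm: "\<And>z. (\<lambda>n. c n * z^n) sums f z" and const: "\<And>z. f z = f 0" and m: "m > 0"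
  shows "c m = 0"
proof (rule ccontr)
  assume cm: "c m \<noteq> 0"
  have f0: "f 0 = c 0" using sm[of 0] powser_sums_zero sums_unique2 by blast
  define a where "a = (\<lambda>n. if n = 0 then 0 else c n)"
  have sa: "(\<lambda>n. a n * (x - 0)^n) sums (f x - c 0)" for x
  proof -
    have "(\<lambda>n. c n * x^n - (if n = 0 then c 0 else 0)) sums (f x - c 0)"
      by (intro sums_diff sm) (use sums_single[of 0 "\<lambda>_. c 0"] in simp)
    moreover have "c n * x^n - (if n = 0 then c 0 else 0) = a n * (x - 0)^n" for n
      by (simp add: a_def)
    ultimately show ?thesis by simp
  qed
  obtain s where s: "0 < s" and ne: "\<And>z. z \<in> cball 0 s - {0} \<Longrightarrow> f z - c 0 \<noteq> 0"
    using powser_0_nonzero[where r=1 and a=a and \<xi>=0 and f="\<lambda>x. f x - c 0" and m=m] sa f0 cm m by (auto simp: a_def)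
  have "complex_of_real s \<in> cball 0 s - {0}" using s by auto
  hence "f (complex_of_real s) - c 0 \<noteq> 0" by (rule ne)
  thus False using const f0 by simp
qed



lemma acoef_rec:
  fixes y :: complex assumes y: "norm y < 1" and y0: "y \<noteq> 0"
  shows "acoef y (Suc m) = y^(2*m+1) * acoef y m"
proof -
  define G where "G = (\<lambda>z. \<Sum>n. gco y n * z^n)"
  have Gs: "(\<lambda>n. gco y n * z^n) sums G z" for z
    unfolding G_def using G_sums[OF y] sums_summable summable_sums by blast
  have Geq: "G z = y*z*Pos y (y^2*z) + acoef y 1 / y - Pos y z" for z
    using Gs G_sums[OF y] sums_unique2 by blast
  define H where "H = (\<lambda>w. Pos y w - acoef y 0 - (w / y^3) * Qf y (w / y^2))"
  have GH: "G z = H (1/z)" if z0: "z \<noteq> 0" for z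
  proof -
    have F1: "EE y z * EE y (1/z) = Pos y z + Pos y (1/z) - acoef y 0" by (rule EE_Pos[OF y z0])
    have yz0: "y^2*z \<noteq> 0" using y0 z0 by simp
    have F2: "EE y (y^2*z) * EE y (1/(y^2*z)) = Pos y (y^2*z) + Pos y (1/(y^2*z)) - acoef y 0"
      by (rule EE_Pos[OF y yz0])
    have FE: "y*z*(EE y (y^2*z) * EE y (1/(y^2*z))) = EE y z * EE y (1/z)" by (rule EE_feq[OF y y0 z0])
    have u: "1/(y^2*z) = (1/z)/y^2" by simp
    have PS: "Pos y (1/(y^2*z)) = acoef y 0 + acoef y 1 * ((1/z)/y^2) + ((1/z)/y^2)^2 * Qf y ((1/z)/y^2)"
      unfolding u by (rule Pos_split[OF y])
    have K: "y*z*(Pos y (y^2*z) + Pos y (1/(y^2*z)) - acoef y 0) = Pos y z + Pos y (1/z) - acoef y 0"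
      using FE F1 F2 by simp
    have K2: "y*z*Pos y (y^2*z) + acoef y 1 / y + ((1/z)/y^3) * Qf y ((1/z)/y^2) = Pos y z + Pos y (1/z) - acoef y 0"
    proof -
      have "y*z*(Pos y (1/(y^2*z)) - acoef y 0) = acoef y 1 / y + ((1/z)/y^3) * Qf y ((1/z)/y^2)"
        unfolding PS using y0 z0 by (simp add: field_simps power2_eq_square power3_eq_cube)
      thus ?thesis using K by (simp add: algebra_simps)
    qed
    show ?thesis unfolding Geq H_def using K2 by (simp add: algebra_simps)
  qed
  have Gsum: "summable (\<lambda>n. gco y n * z^n)" for z using Gs sums_summable by blast
  have Gcont: "isCont G z" for z
    unfolding G_def by (rule isCont_powser_converges_everywhere) (rule Gsum)
  have c1: "isCont (\<lambda>w. Qf y (w / y^2)) w" for w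
    by (rule isCont_o2[OF _ Q_isCont[OF y]]) (intro continuous_intros, use y0 in simp)
  have Hcont: "isCont H w" for w
    unfolding H_def by (intro continuous_intros Pos_isCont[OF y] c1) (use y0 in simp_all)
  have b1: "bounded (G ` cball 0 1)"
    by (intro compact_imp_bounded compact_continuous_image continuous_at_imp_continuous_on compact_cball ballI Gcont)
  have b2: "bounded (H ` cball 0 1)"
    by (intro compact_imp_bounded compact_continuous_image continuous_at_imp_continuous_on compact_cball ballI Hcont)
  have sub: "range G \<subseteq> G ` cball 0 1 \<union> H ` cball 0 1"
  proof
    fix v assume "v \<in> range G"
    then obtain z where v: "v = G z" by blast
    show "v \<in> G ` cball 0 1 \<union> H ` cball 0 1"
    proof (cases "norm z \<le> 1")
      case True then show ?thesis using v by auto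
    next
      case False
      hence z0: "z \<noteq> 0" by auto
      have nz1: "norm z > 1" "norm z > 0" using False by auto
      hence "1 / norm z \<le> 1" by (simp add: field_simps)
      hence "norm (1/z) \<le> 1" by (simp add: norm_divide)
      hence "1/z \<in> cball 0 1" by simp
      thus ?thesis using v GH[OF z0] by blast
    qed
  qed
  have bG: "bounded (range G)" by (rule bounded_subset[OF _ sub]) (use b1 b2 in simp)
  have hol: "G holomorphic_on UNIV"
  proof (subst holomorphic_on_open, simp, intro ballI exI)
    fix z :: complex
    show "(G has_field_derivative (\<Sum>n. diffs (gco y) n * z^n)) (at z)"
      unfolding G_def by (rule termdiffs_strong_converges_everywhere) (rule Gsum)
  qed
  obtain c where c: "\<And>z. G z = c"
    using Liouville_theorem[OF hol bG] unfolding constant_on_def by blast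
  have "gco y (Suc m) = 0"
    by (rule powser_const_coeff[OF Gs]) (use c in auto)
  thus ?thesis by simp
qed

lemma acoef_closed:
  fixes y :: complex assumes y: "norm y < 1" and y0: "y \<noteq> 0"
  shows "acoef y n = y^(n^2) * acoef y 0"
proof (induction n)
  case 0 then show ?case by simp
next
  case (Suc n)
  have e: "Suc n ^ 2 = (2*n+1) + n^2" by (simp add: power2_eq_square)
  show ?case unfolding acoef_rec[OF y y0] Suc e power_add by (simp add: mult_ac)
qed

lemma theta_summable_norm:
  fixes y z :: complex assumes y: "norm y < 1"
  shows "summable (\<lambda>n. norm (y^(n^2) * z^n))"
proof -
  have "(\<lambda>n. norm y ^ n * norm z) \<longlonglongrightarrow> 0 * norm z"
    by (intro tendsto_mult tendsto_const LIMSEQ_power_zero) (use y in auto)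
  hence "eventually (\<lambda>n. norm y ^ n * norm z < 1/2) sequentially"
    by (intro order_tendstoD) auto
  then obtain N where N: "\<And>n. n \<ge> N \<Longrightarrow> norm y ^ n * norm z < 1/2"
    by (auto simp: eventually_sequentially)
  show ?thesis
  proof (rule summable_comparison_test')
    show "summable (\<lambda>n. (1/2::real)^n)" by (rule summable_geometric) simp
  next
    fix n assume n: "n \<ge> N"
    have "norm (y^(n^2) * z^n) = (norm y ^ n * norm z)^n"
      by (simp add: norm_mult norm_power power_mult_distrib power2_eq_square power_mult)
    also have "\<dots> \<le> (1/2)^n"
      by (intro power_mono) (use N[OF n] in auto)
    finally show "norm (norm (y^(n^2) * z^n)) \<le> (1/2)^n" by simp
  qed
qed

lemma theta_summable:
  fixes y z :: complex assumes y: "norm y < 1"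
  shows "summable (\<lambda>n. y^(n^2) * z^n)"
  by (rule summable_norm_cancel[OF theta_summable_norm[OF y]])

lemma Pos_closed:
  fixes y :: complex assumes y: "norm y < 1" and y0: "y \<noteq> 0"
  shows "Pos y z = acoef y 0 * (\<Sum>n. y^(n^2) * z^n)"
proof -
  have "(\<lambda>n. acoef y 0 * (y^(n^2) * z^n)) sums (acoef y 0 * (\<Sum>n. y^(n^2) * z^n))"
    by (rule sums_mult[OF summable_sums[OF theta_summable[OF y]]])
  moreover have "(\<lambda>n. acoef y 0 * (y^(n^2) * z^n)) = (\<lambda>n. acoef y n * z^n)"
  proof
    fix n
    show "acoef y 0 * (y^(n^2) * z^n) = acoef y n * z^n"
      using acoef_closed[OF y y0, of n] by (simp add: mult_ac)
  qed
  ultimately show ?thesis using Pos_sums[OF y] sums_unique2 by metis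
qed



lemma nat_has_sum:
  fixes f :: "nat \<Rightarrow> complex"
  assumes "summable (\<lambda>n. norm (f n))" shows "(f has_sum (\<Sum>n. f n)) UNIV"
  by (rule norm_summable_imp_has_sum[OF assms summable_sums[OF summable_norm_cancel[OF assms]]])

lemma nat_has_sum_Suc:
  fixes f :: "nat \<Rightarrow> complex"
  assumes s: "summable (\<lambda>n. norm (f n))" shows "((\<lambda>n. f (Suc n)) has_sum ((\<Sum>n. f n) - f 0)) UNIV"
proof (rule norm_summable_imp_has_sum)
  show "summable (\<lambda>n. norm (f (Suc n)))" using s by (subst summable_Suc_iff)
  have "f sums (\<Sum>n. f n)" by (rule summable_sums[OF summable_norm_cancel[OF s]])
  thus "(\<lambda>n. f (Suc n)) sums ((\<Sum>n. f n) - f 0)" by (subst sums_Suc_iff) simp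
qed

lemma has_sum_int_split:
  fixes f :: "int \<Rightarrow> complex"
  assumes a: "((\<lambda>n. f (int n)) has_sum a) UNIV" and b: "((\<lambda>n. f (- int n - 1)) has_sum b) UNIV"
  shows "(f has_sum (a+b)) UNIV"
proof -
  have i1: "inj (int)" by (simp add: inj_on_def)
  have i2: "inj (\<lambda>n::nat. - int n - 1)" by (auto simp: inj_on_def)
  have h1: "(f has_sum a) (range int)" using a has_sum_reindex[OF i1, of f a] by (simp add: o_def)
  have h2: "(f has_sum b) (range (\<lambda>n::nat. - int n - 1))"
    using b has_sum_reindex[OF i2, of f b] by (simp add: o_def)
  have d: "range int \<inter> range (\<lambda>n::nat. - int n - 1) = {}" by auto
  have u: "range int \<union> range (\<lambda>n::nat. - int n - 1) = (UNIV::int set)"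
  proof (intro equalityI subsetI)
    fix k :: int
    show "k \<in> range int \<union> range (\<lambda>n::nat. - int n - 1)"
    proof (cases "k \<ge> 0")
      case True then have "k = int (nat k)" by simp
      thus ?thesis by blast
    next
      case False then have "k = - int (nat (-k-1)) - 1" by simp
      thus ?thesis by blast
    qed
  qed simp
  show ?thesis using has_sum_Un_disjoint[OF h1 h2 d] u by simp
qed

definition th1 :: "complex \<Rightarrow> complex" where "th1 y = (\<Sum>n. y^(n^2))"
definition th2 :: "complex \<Rightarrow> complex" where "th2 y = (\<Sum>n. y^(n^2+n))"

lemma th1_norm: "norm (y::complex) < 1 \<Longrightarrow> summable (\<lambda>n. norm (y^(n^2)))"
  using theta_summable_norm[of y 1] by simp

lemma th2_norm: "norm (y::complex) < 1 \<Longrightarrow> summable (\<lambda>n. norm (y^(n^2+n)))"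
  using theta_summable_norm[of y y] by (simp add: power_add)

lemma Theta_has_sum:
  fixes y :: complex assumes y: "norm y < 1"
  shows "((\<lambda>n::int. y ^ nat (n^2)) has_sum (2 * th1 y - 1)) UNIV"
proof -
  have a: "((\<lambda>n::nat. y ^ nat ((int n)^2)) has_sum th1 y) UNIV"
    using nat_has_sum[OF th1_norm[OF y]] unfolding th1_def by (simp add: nat_power_eq)
  have e: "nat ((- int n - 1)^2) = (Suc n)^2" for n :: nat
  proof -
    have "(- int n - 1)^2 = int ((Suc n)^2)" by (simp add: power2_eq_square algebra_simps)
    thus ?thesis by (simp only: nat_int)
  qed
  have b: "((\<lambda>n::nat. y ^ nat ((- int n - 1)^2)) has_sum (th1 y - 1)) UNIV"
    using nat_has_sum_Suc[OF th1_norm[OF y]] unfolding th1_def e by simp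
  show ?thesis using has_sum_int_split[OF a b] by simp
qed

lemma Phi_has_sum:
  fixes y :: complex assumes y: "norm y < 1"
  shows "((\<lambda>n::int. y ^ nat (n^2 + n)) has_sum (2 * th2 y)) UNIV"
proof -
  have e1: "nat ((int n)^2 + int n) = n^2 + n" for n :: nat
  proof -
    have "(int n)^2 + int n = int (n^2 + n)" by simp
    thus ?thesis by (simp only: nat_int)
  qed
  have a: "((\<lambda>n::nat. y ^ nat ((int n)^2 + int n)) has_sum th2 y) UNIV"
    using nat_has_sum[OF th2_norm[OF y]] unfolding th2_def e1 .
  have e: "nat ((- int n - 1)^2 + (- int n - 1)) = n^2 + n" for n :: nat
  proof -
    have "(- int n - 1)^2 + (- int n - 1) = int (n^2 + n)" by (simp add: power2_eq_square algebra_simps)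
    thus ?thesis by (simp only: nat_int)
  qed
  have b: "((\<lambda>n::nat. y ^ nat ((- int n - 1)^2 + (- int n - 1))) has_sum th2 y) UNIV"
    using nat_has_sum[OF th2_norm[OF y]] unfolding th2_def e .
  show ?thesis using has_sum_int_split[OF a b] by simp
qed

lemma pow_nat_E:
  fixes x :: complex and a b c d :: int
  assumes "a \<ge> 0" "b \<ge> 0" "c \<ge> 0" "d \<ge> 0" "a + b = 2*c + 2*d"
  shows "x ^ nat a * x ^ nat b = (x^2) ^ nat c * (x^2) ^ nat d"
proof -
  have "nat a + nat b = 2 * nat c + 2 * nat d" using assms by arith
  hence "x ^ nat a * x ^ nat b = x ^ (2 * nat c + 2 * nat d)" by (simp add: power_add[symmetric])
  also have "\<dots> = (x^2) ^ nat c * (x^2) ^ nat d" by (simp add: power_add power_mult)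
  finally show ?thesis .
qed

lemma pow_nat_O:
  fixes x :: complex and a b c d :: int
  assumes "a \<ge> 0" "b \<ge> 0" "c \<ge> 0" "d \<ge> 0" "a + b = 2*c + 2*d + 1"
  shows "x ^ nat a * x ^ nat b = x * ((x^2) ^ nat c * (x^2) ^ nat d)"
proof -
  have "nat a + nat b = 2 * nat c + 2 * nat d + 1" using assms by arith
  hence "x ^ nat a * x ^ nat b = x ^ (2 * nat c + 2 * nat d + 1)" by (simp add: power_add[symmetric])
  also have "\<dots> = x * ((x^2) ^ nat c * (x^2) ^ nat d)"
    by (simp only: power_add power_mult power_one_right) (simp add: mult_ac)
  finally show ?thesis .
qed

lemma sq_plus_nonneg: "(n::int)^2 + n \<ge> 0"
proof (cases "n \<ge> 0")
  case True then show ?thesis by simp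
next
  case False
  hence "n^2 + n = (-n) * (-n - 1)" by (simp add: power2_eq_square algebra_simps)
  moreover have "(-n) * (-n - 1) \<ge> 0" using False by (intro mult_nonneg_nonneg) auto
  ultimately show ?thesis by simp
qed

lemma theta_id1:
  fixes x :: complex assumes x: "norm x < 1"
  shows "(2 * th1 x - 1)^2 = (2 * th1 (x^2) - 1)^2 + x * (2 * th2 (x^2))^2"
proof -
  have x2: "norm (x^2) < 1" using x by (simp add: norm_power abs_square_less_1)
  define h where "h = (\<lambda>(m::int,n::int). x ^ nat (m^2) * x ^ nat (n^2))"
  have P: "(h has_sum ((2 * th1 x - 1) * (2 * th1 x - 1))) UNIV"
    using has_sum_prod_complex[OF Theta_has_sum[OF x] Theta_has_sum[OF x]] by (simp add: h_def)
  define \<psi>E where "\<psi>E = (\<lambda>(i::int,j::int). (i+j, i-j))"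
  define \<psi>O where "\<psi>O = (\<lambda>(i::int,j::int). (i+j+1, i-j))"
  have iE: "inj \<psi>E" by (auto simp: inj_on_def \<psi>E_def)
  have iO: "inj \<psi>O" by (auto simp: inj_on_def \<psi>O_def)
  have hE: "(h \<circ> \<psi>E) = (\<lambda>(i,j). (x^2) ^ nat (i^2) * (x^2) ^ nat (j^2))"
  proof (intro ext, clarify)
    fix i j :: int
    show "(h \<circ> \<psi>E) (i,j) = (x^2) ^ nat (i^2) * (x^2) ^ nat (j^2)"
      unfolding h_def \<psi>E_def by (simp, rule pow_nat_E) ((simp add: sq_plus_nonneg; fail) | simp add: power2_eq_square algebra_simps)+
  qed
  have hO: "(h \<circ> \<psi>O) = (\<lambda>(i,j). x * ((x^2) ^ nat (i^2 + i) * (x^2) ^ nat (j^2 + j)))"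
  proof (intro ext, clarify)
    fix i j :: int
    show "(h \<circ> \<psi>O) (i,j) = x * ((x^2) ^ nat (i^2 + i) * (x^2) ^ nat (j^2 + j))"
      unfolding h_def \<psi>O_def by (simp, rule pow_nat_O) ((simp add: sq_plus_nonneg; fail) | simp add: power2_eq_square algebra_simps)+
  qed
  have sE: "(h has_sum ((2 * th1 (x^2) - 1) * (2 * th1 (x^2) - 1))) (range \<psi>E)"
  proof -
    have "((\<lambda>(i,j). (x^2) ^ nat (i^2) * (x^2) ^ nat (j^2)) has_sum ((2 * th1 (x^2) - 1) * (2 * th1 (x^2) - 1))) (UNIV \<times> UNIV)"
      by (rule has_sum_prod_complex[OF Theta_has_sum[OF x2] Theta_has_sum[OF x2]])
    thus ?thesis using has_sum_reindex[OF iE, of h] hE by simp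
  qed
  have sO: "(h has_sum (x * (2 * th2 (x^2) * (2 * th2 (x^2))))) (range \<psi>O)"
  proof -
    have "((\<lambda>(i,j). (x^2) ^ nat (i^2 + i) * (x^2) ^ nat (j^2 + j)) has_sum (2 * th2 (x^2) * (2 * th2 (x^2)))) (UNIV \<times> UNIV)"
      by (rule has_sum_prod_complex[OF Phi_has_sum[OF x2] Phi_has_sum[OF x2]])
    hence "((\<lambda>p. x * (case p of (i,j) \<Rightarrow> (x^2) ^ nat (i^2 + i) * (x^2) ^ nat (j^2 + j))) has_sum (x * (2 * th2 (x^2) * (2 * th2 (x^2))))) UNIV"
      using has_sum_cmult_right by simp
    moreover have "(\<lambda>p. x * (case p of (i,j) \<Rightarrow> (x^2) ^ nat (i^2 + i) * (x^2) ^ nat (j^2 + j))) = h \<circ> \<psi>O"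
      unfolding hO by auto
    ultimately show ?thesis using has_sum_reindex[OF iO, of h] by simp
  qed
  have d: "range \<psi>E \<inter> range \<psi>O = {}"
    by (auto simp: \<psi>E_def \<psi>O_def) presburger
  have u: "range \<psi>E \<union> range \<psi>O = UNIV"
  proof (intro equalityI subsetI)
    fix p :: "int \<times> int"
    obtain m n where p: "p = (m,n)" by force
    show "p \<in> range \<psi>E \<union> range \<psi>O"
    proof (cases "even (m+n)")
      case True
      hence "p = \<psi>E ((m+n) div 2, (m-n) div 2)" unfolding p \<psi>E_def by simp presburger
      thus ?thesis by blast
    next
      case False
      hence "p = \<psi>O ((m+n) div 2, (m+n) div 2 - n)" unfolding p \<psi>O_def by simp presburger
      thus ?thesis by blast
    qed
  qed simp
  have "(h has_sum ((2 * th1 (x^2) - 1) * (2 * th1 (x^2) - 1) + x * (2 * th2 (x^2) * (2 * th2 (x^2))))) UNIV"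
    using has_sum_Un_disjoint[OF sE sO d] u by simp
  hence "(2 * th1 x - 1) * (2 * th1 x - 1) = (2 * th1 (x^2) - 1) * (2 * th1 (x^2) - 1) + x * (2 * th2 (x^2) * (2 * th2 (x^2)))"
    using P has_sum_unique by blast
  thus ?thesis by (simp add: power2_eq_square)
qed



lemma theta_id2:
  fixes x :: complex assumes x: "norm x < 1"
  shows "(2 * th2 x)^2 = 2 * (2 * th2 (x^2)) * (2 * th1 (x^2) - 1)"
proof -
  have x2: "norm (x^2) < 1" using x by (simp add: norm_power abs_square_less_1)
  define h where "h = (\<lambda>(m::int,n::int). x ^ nat (m^2 + m) * x ^ nat (n^2 + n))"
  have P: "(h has_sum ((2 * th2 x) * (2 * th2 x))) UNIV"
    using has_sum_prod_complex[OF Phi_has_sum[OF x] Phi_has_sum[OF x]] by (simp add: h_def)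
  define \<psi>E where "\<psi>E = (\<lambda>(i::int,j::int). (i+j, i-j))"
  define \<psi>O where "\<psi>O = (\<lambda>(i::int,j::int). (i+j, i-j-1))"
  have iE: "inj \<psi>E" by (auto simp: inj_on_def \<psi>E_def)
  have iO: "inj \<psi>O" by (auto simp: inj_on_def \<psi>O_def)
  have hE: "(h \<circ> \<psi>E) = (\<lambda>(i,j). (x^2) ^ nat (i^2 + i) * (x^2) ^ nat (j^2))"
  proof (intro ext, clarify)
    fix i j :: int
    show "(h \<circ> \<psi>E) (i,j) = (x^2) ^ nat (i^2 + i) * (x^2) ^ nat (j^2)"
      unfolding h_def \<psi>E_def by (simp, rule pow_nat_E) ((simp add: sq_plus_nonneg; fail) | simp add: power2_eq_square algebra_simps)+
  qed
  have hO: "(h \<circ> \<psi>O) = (\<lambda>(i,j). (x^2) ^ nat (i^2) * (x^2) ^ nat (j^2 + j))"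
  proof (intro ext, clarify)
    fix i j :: int
    show "(h \<circ> \<psi>O) (i,j) = (x^2) ^ nat (i^2) * (x^2) ^ nat (j^2 + j)"
      unfolding h_def \<psi>O_def by (simp, rule pow_nat_E) ((simp add: sq_plus_nonneg; fail) | simp add: power2_eq_square algebra_simps)+
  qed
  have sE: "(h has_sum ((2 * th2 (x^2)) * (2 * th1 (x^2) - 1))) (range \<psi>E)"
  proof -
    have "((\<lambda>(i,j). (x^2) ^ nat (i^2 + i) * (x^2) ^ nat (j^2)) has_sum ((2 * th2 (x^2)) * (2 * th1 (x^2) - 1))) (UNIV \<times> UNIV)"
      by (rule has_sum_prod_complex[OF Phi_has_sum[OF x2] Theta_has_sum[OF x2]])
    thus ?thesis using has_sum_reindex[OF iE, of h] hE by simp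
  qed
  have sO: "(h has_sum ((2 * th1 (x^2) - 1) * (2 * th2 (x^2)))) (range \<psi>O)"
  proof -
    have "((\<lambda>(i,j). (x^2) ^ nat (i^2) * (x^2) ^ nat (j^2 + j)) has_sum ((2 * th1 (x^2) - 1) * (2 * th2 (x^2)))) (UNIV \<times> UNIV)"
      by (rule has_sum_prod_complex[OF Theta_has_sum[OF x2] Phi_has_sum[OF x2]])
    thus ?thesis using has_sum_reindex[OF iO, of h] hO by simp
  qed
  have d: "range \<psi>E \<inter> range \<psi>O = {}"
    by (auto simp: \<psi>E_def \<psi>O_def) presburger
  have u: "range \<psi>E \<union> range \<psi>O = UNIV"
  proof (intro equalityI subsetI)
    fix p :: "int \<times> int"
    obtain m n where p: "p = (m,n)" by force
    show "p \<in> range \<psi>E \<union> range \<psi>O"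
    proof (cases "even (m+n)")
      case True
      hence "p = \<psi>E ((m+n) div 2, (m-n) div 2)" unfolding p \<psi>E_def by simp presburger
      thus ?thesis by blast
    next
      case False
      hence "p = \<psi>O ((m+n+1) div 2, m - (m+n+1) div 2)" unfolding p \<psi>O_def by simp presburger
      thus ?thesis by blast
    qed
  qed simp
  have "(h has_sum ((2 * th2 (x^2)) * (2 * th1 (x^2) - 1) + (2 * th1 (x^2) - 1) * (2 * th2 (x^2)))) UNIV"
    using has_sum_Un_disjoint[OF sE sO d] u by simp
  hence "(2 * th2 x) * (2 * th2 x) = (2 * th2 (x^2)) * (2 * th1 (x^2) - 1) + (2 * th1 (x^2) - 1) * (2 * th2 (x^2))"
    using P has_sum_unique by blast
  thus ?thesis by (simp add: power2_eq_square algebra_simps)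
qed

lemma one_plus_nz: "norm (w::complex) < 1 \<Longrightarrow> 1 + w \<noteq> 0"
  by (metis add_eq_0_iff norm_minus_cancel norm_one less_irrefl)

lemma pow_norm_lt: "norm (y::complex) < 1 \<Longrightarrow> k > 0 \<Longrightarrow> norm (y^k) < 1"
  by (simp add: norm_power power_less_one_iff)

lemma EE1_nz:
  assumes y: "norm y < 1" shows "EE y 1 \<noteq> 0"
proof (rule EE_nonzero[OF y])
  fix n
  show "1 + y^(2*n+1)*1 \<noteq> 0" using one_plus_nz[OF pow_norm_lt[OF y, of "2*n+1"]] by simp
qed

lemma EEy_nz:
  assumes y: "norm y < 1" shows "EE y y \<noteq> 0"
proof (rule EE_nonzero[OF y])
  fix n
  have "y^(2*n+1)*y = y^(2*n+2)" by simp
  thus "1 + y^(2*n+1)*y \<noteq> 0" using one_plus_nz[OF pow_norm_lt[OF y, of "2*n+2"]] by (simp add: mult_ac)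
qed

lemma EE_values:
  fixes y :: complex assumes y: "norm y < 1" and y0: "y \<noteq> 0"
  shows "EE y 1 * EE y 1 = acoef y 0 * (2 * th1 y - 1)"
    and "EE y y * EE y y = acoef y 0 * th2 y"
proof -
  have P1: "Pos y 1 = acoef y 0 * th1 y" unfolding Pos_closed[OF y y0] th1_def by simp
  show "EE y 1 * EE y 1 = acoef y 0 * (2 * th1 y - 1)"
    using EE_Pos[OF y, of 1] P1 by (simp add: algebra_simps)
  have inv: "EE y (1/y) = 2 * EE y y"
  proof -
    have "EE y (1/y) = (1 + y*(1/y)) * EE y (y^2*(1/y))" by (rule EE_func[OF y])
    also have "y*(1/y) = 1" using y0 by simp
    also have "y^2*(1/y) = y" using y0 by (simp add: power2_eq_square)
    finally show ?thesis by simp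
  qed
  have Py: "Pos y y = acoef y 0 * th2 y" unfolding Pos_closed[OF y y0] th2_def by (simp add: power_add)
  have Pinv: "Pos y (1/y) = acoef y 0 * (1 + th2 y)"
  proof -
    define f where "f = (\<lambda>n. y^(n^2) * (1/y)^n)"
    have "(\<lambda>n. f (Suc n)) = (\<lambda>n. y^(n^2+n))"
    proof
      fix n
      have "Suc n ^ 2 = (n^2 + n) + Suc n" by (simp add: power2_eq_square)
      hence "y^(Suc n ^ 2) = y^(n^2+n) * y^(Suc n)" by (simp only: power_add)
      thus "f (Suc n) = y^(n^2+n)" using y0 by (simp add: f_def power_one_over)
    qed
    moreover have "(\<lambda>n. y^(n^2+n)) sums th2 y"
      unfolding th2_def by (rule summable_sums[OF summable_norm_cancel[OF th2_norm[OF y]]])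
    ultimately have "(\<lambda>n. f (Suc n)) sums th2 y" by simp
    hence "f sums (th2 y + f 0)" by (subst (asm) sums_Suc_iff)
    hence "(\<Sum>n. f n) = 1 + th2 y" by (simp add: sums_iff f_def)
    thus ?thesis unfolding Pos_closed[OF y y0] f_def by simp
  qed
  have "EE y y * (2 * EE y y) = acoef y 0 * th2 y + acoef y 0 * (1 + th2 y) - acoef y 0"
    using EE_Pos[OF y y0] inv Py Pinv by simp
  thus "EE y y * EE y y = acoef y 0 * th2 y" by (simp add: algebra_simps)
qed

definition Aprod :: "complex \<Rightarrow> complex" where
  "Aprod y = prodinf (\<lambda>m. ((1 + y^(2*m+2)) / (1 + y^(2*m+1)))^2)"

lemma Aprod_eq:
  fixes y :: complex assumes y: "norm y < 1"
  shows "Aprod y = (EE y y / EE y 1)^2"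
proof -
  define f where "f = (\<lambda>m. ((1 + y^(2*m+2)) / (1 + y^(2*m+1)))^2)"
  define L where "L = (EE y y / EE y 1)^2"
  have part: "(\<Prod>m<N. f m) = ((\<Prod>m<N. (1 + y^(2*m+1)*y)) / (\<Prod>m<N. (1 + y^(2*m+1)*1)))^2" for N
  proof -
    have fm: "f m = ((1 + y^(2*m+1)*y)/(1 + y^(2*m+1)*1))^2" for m unfolding f_def by (simp add: mult_ac)
    show ?thesis unfolding fm by (simp only: prod_power_distrib[symmetric] prod_dividef)
  qed
  have "(\<lambda>N. ((\<Prod>m<N. (1 + y^(2*m+1)*y)) / (\<Prod>m<N. (1 + y^(2*m+1)*1)))^2) \<longlonglongrightarrow> L"
    unfolding L_def by (intro tendsto_power tendsto_divide EE_prod_lim[OF y] EE1_nz[OF y])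
  hence t: "(\<lambda>N. \<Prod>m<N. f m) \<longlonglongrightarrow> L" by (simp only: part)
  have L0: "L \<noteq> 0" unfolding L_def using EEy_nz[OF y] EE1_nz[OF y] by simp
  have "(\<lambda>n. \<Prod>i\<le>n. f (i + 0)) \<longlonglongrightarrow> L"
    using LIMSEQ_Suc[OF t] by (simp add: lessThan_Suc_atMost)
  hence "raw_has_prod f 0 L" using L0 by (simp add: raw_has_prod_def)
  hence "f has_prod L" by (simp add: has_prod_def)
  hence "L = prodinf f" by (rule has_prod_unique)
  thus ?thesis by (simp add: Aprod_def f_def L_def)
qed

lemma Aprod_theta:
  fixes y :: complex assumes y: "norm y < 1" and y0: "y \<noteq> 0"
  shows "Aprod y = th2 y / (2 * th1 y - 1)" and "2 * th1 y - 1 \<noteq> 0"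
proof -
  have e1: "EE y 1 * EE y 1 = acoef y 0 * (2 * th1 y - 1)" by (rule EE_values(1)[OF y y0])
  have e2: "EE y y * EE y y = acoef y 0 * th2 y" by (rule EE_values(2)[OF y y0])
  have nz: "EE y 1 * EE y 1 \<noteq> 0" using EE1_nz[OF y] by simp
  hence a0: "acoef y 0 \<noteq> 0" and s0: "2 * th1 y - 1 \<noteq> 0" using e1 by auto
  show "2 * th1 y - 1 \<noteq> 0" by (rule s0)
  have "Aprod y = (EE y y * EE y y) / (EE y 1 * EE y 1)"
    unfolding Aprod_eq[OF y] by (simp add: power2_eq_square)
  also have "\<dots> = th2 y / (2 * th1 y - 1)" unfolding e1 e2 using a0 by simp
  finally show "Aprod y = th2 y / (2 * th1 y - 1)" .
qed



lemma qpow_mult_nat: "qpow (real k * r) \<tau> = (qpow r \<tau>)^k"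
proof -
  have "2 * of_real pi * \<i> * of_real (real k * r) * \<tau> = of_nat k * (2 * of_real pi * \<i> * of_real r * \<tau>)"
    by (simp add: mult_ac)
  thus ?thesis unfolding qpow_def by (simp only: exp_of_nat_mult)
qed

lemma qpow_2tau: "qpow r (2*\<tau>) = qpow (2* r) \<tau>"
  unfolding qpow_def by (simp add: mult_ac)

lemma key_alg:
  fixes x s t sb tb :: complex
  assumes s0: "s \<noteq> 0" and sb0: "sb \<noteq> 0"
    and i1: "s^2 = sb^2 + x * (2* tb)^2" and i2: "(2* t)^2 = 2*(2* tb)* sb"
  shows "(t/s)^2 * (1 + 4* x*(tb/sb)^2) = tb/sb"
proof -
  have j1: "sb^2 + 4* x* tb^2 = s^2" using i1 by (simp add: power_mult_distrib)
  have j2: "t^2 = tb* sb" using i2 by (simp add: power_mult_distrib)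
  have "1 + 4* x*(tb/sb)^2 = (sb^2 + 4* x* tb^2)/sb^2" using sb0 by (simp add: field_simps)
  also have "\<dots> = s^2/sb^2" by (simp only: j1)
  finally have "(t/s)^2 * (1 + 4* x*(tb/sb)^2) = (t/s)^2 * (s^2/sb^2)" by simp
  also have "\<dots> = t^2/sb^2" using s0 by (simp add: power_divide)
  also have "\<dots> = tb/sb" unfolding j2 using sb0 by (simp add: power2_eq_square)
  finally show ?thesis .
qed

theorem proposition6:
  fixes \<tau> :: complex
  assumes "Im \<tau> > 0"
  shows "(pfun \<tau>)^2 * (pfun (2 * \<tau>))^2 + (pfun \<tau>)^2 - 2 * pfun (2 * \<tau>) = 0"
proof -
  define x where "x = qpow (1/4) \<tau>"
  define w where "w = qpow (1/16) \<tau>"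
  have xk: "qpow (real k / 4) \<tau> = x^k" for k
    using qpow_mult_nat[of k "1/4" \<tau>] unfolding x_def by simp
  have fe1: "(\<lambda>m. ((1 + qpow (real (Suc m) / 2) \<tau>) / (1 + qpow (real (Suc m) / 2 - 1/4) \<tau>))^2)
           = (\<lambda>m. ((1 + x^(2* m+2)) / (1 + x^(2* m+1)))^2)"
  proof
    fix m
    have a0: "real (Suc m) / 2 = real (2* m+2) / 4" by simp
    have b0: "real (Suc m) / 2 - 1/4 = real (2* m+1) / 4" by simp
    have a: "qpow (real (Suc m) / 2) \<tau> = x^(2* m+2)" by (simp only: a0 xk)
    have b: "qpow (real (Suc m) / 2 - 1/4) \<tau> = x^(2* m+1)" by (simp only: b0 xk)
    show "((1 + qpow (real (Suc m) / 2) \<tau>) / (1 + qpow (real (Suc m) / 2 - 1/4) \<tau>))^2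
          = ((1 + x^(2* m+2)) / (1 + x^(2* m+1)))^2" unfolding a b ..
  qed
  have pf1: "pfun \<tau> = 2 * w * Aprod x"
    unfolding pfun_def Aprod_def fe1 w_def ..
  have fe2: "(\<lambda>m. ((1 + qpow (real (Suc m) / 2) (2*\<tau>)) / (1 + qpow (real (Suc m) / 2 - 1/4) (2*\<tau>)))^2)
           = (\<lambda>m. ((1 + (x^2)^(2* m+2)) / (1 + (x^2)^(2* m+1)))^2)"
  proof
    fix m
    have a0: "2 * (real (Suc m) / 2) = real (4* m+4) / 4" by simp
    have b0: "2 * (real (Suc m) / 2 - 1/4) = real (4* m+2) / 4" by simp
    have c1: "4* m+4 = 2 * (2* m+2)" "4* m+2 = 2 * (2* m+1)" by simp_all
    have a: "qpow (real (Suc m) / 2) (2*\<tau>) = (x^2)^(2* m+2)"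
      by (simp only: qpow_2tau a0 xk c1(1) power_mult)
    have b: "qpow (real (Suc m) / 2 - 1/4) (2*\<tau>) = (x^2)^(2* m+1)"
      by (simp only: qpow_2tau b0 xk c1(2) power_mult)
    show "((1 + qpow (real (Suc m) / 2) (2*\<tau>)) / (1 + qpow (real (Suc m) / 2 - 1/4) (2*\<tau>)))^2
          = ((1 + (x^2)^(2* m+2)) / (1 + (x^2)^(2* m+1)))^2" unfolding a b ..
  qed
  have w2: "qpow (1/16) (2*\<tau>) = w^2"
    unfolding qpow_2tau w_def using qpow_mult_nat[of 2 "1/16" \<tau>] by simp
  have pf2: "pfun (2*\<tau>) = 2 * w^2 * Aprod (x^2)"
    unfolding pfun_def Aprod_def fe2 w2 ..
  have w4: "w^4 = x"
    unfolding w_def x_def using qpow_mult_nat[of 4 "1/16" \<tau>] by simp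
  have x1: "norm x < 1"
  proof -
    have "norm x = exp (Re (2 * of_real pi * \<i> * of_real (1/4) * \<tau>))"
      unfolding x_def qpow_def by (rule norm_exp_eq_Re)
    also have "Re (2 * of_real pi * \<i> * of_real (1/4) * \<tau>) = - (pi/2) * Im \<tau>" by simp
    also have "exp (- (pi/2) * Im \<tau>) < 1" using assms pi_gt_zero by simp
    finally show ?thesis .
  qed
  have x0: "x \<noteq> 0" unfolding x_def qpow_def by simp
  have x21: "norm (x^2) < 1" using x1 by (simp add: norm_power abs_square_less_1)
  have x20: "x^2 \<noteq> 0" using x0 by simp
  define s where "s = 2 * th1 x - 1"
  define t where "t = th2 x"
  define sb where "sb = 2 * th1 (x^2) - 1"
  define tb where "tb = th2 (x^2)"
  have A: "Aprod x = t/s" and s0: "s \<noteq> 0" using Aprod_theta[OF x1 x0] by (simp_all add: s_def t_def)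
  have Ab: "Aprod (x^2) = tb/sb" and sb0: "sb \<noteq> 0" using Aprod_theta[OF x21 x20] by (simp_all add: sb_def tb_def)
  have i1: "s^2 = sb^2 + x * (2* tb)^2" unfolding s_def sb_def tb_def by (rule theta_id1[OF x1])
  have i2: "(2* t)^2 = 2*(2* tb)* sb" unfolding t_def sb_def tb_def by (rule theta_id2[OF x1])
  have key: "(t/s)^2 * (1 + 4* x*(tb/sb)^2) = tb/sb" by (rule key_alg[OF s0 sb0 i1 i2])
  have "(pfun \<tau>)^2 * (pfun (2 * \<tau>))^2 + (pfun \<tau>)^2 - 2 * pfun (2 * \<tau>)
        = 4* w^2*((t/s)^2 * (1 + 4* w^4*(tb/sb)^2) - tb/sb)"
    unfolding pf1 pf2 A Ab by algebra
  also have "\<dots> = 0" unfolding w4 key by simp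
  finally show ?thesis .
qed

end
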